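(* Under the channel-resolvability polar coding scheme described in the context, for every block $i\in\{1,\dots,k\}$, $$\mathbb{D}\big(q_{X^{1:N}Y^{1:N}}\,\big\|\,\widetilde{p}_{X_i^{1:N}Y_i^{1:N}}\big)\le N\delta_N .$$
   Context: All logarithms are base 2 and entropies are in bits; $\mathbb{D}(\cdot\|\cdot)$ is the Kullback–Leibler divergence, with $\mathbb{D}(p\|q)=+\infty$ if $p(x)>0=q(x)$ for some $x$. For a vector $a^{1:N}$ and $\mathcal{A}\subseteq\{1,\dots,N\}$, $a^{1:N}[\mathcal{A}]$ denotes the subvector of components with indices in $\mathcal{A}$. Setting (channel resolvability scheme): Let $\mathcal{X},\mathcal{Y}$ be finite alphabets with $|\mathcal{X}|$ a prime number, identified with the field $\mathbb{F}_{|\mathcal{X}|}$. Let $q_{XY}=q_Xq_{Y|X}$ be a joint distribution, where $q_{Y|X}$ is a discrete memoryless channel. Let $N=2^n$, $n\ge1$, and $G_n=\begin{bmatrix}1&0\\1&1\end{bmatrix}^{\otimes n}$ (Kronecker power, arithmetic over $\mathbb{F}_{|\mathcal{X}|}$). Let $(X^{1:N},Y^{1:N})$ be i.i.d. with law $q_{XY}$ (joint law $q_{X^{1:N}Y^{1:N}}=\prod q_{XY}$) and $U^{1:N}=X^{1:N}G_n$, with induced distributions denoted $q$. Fix $\beta\in(0,1/2)$, $\delta_N=2^{-N^\beta}$, and $\mathcal{V}_X=\{j: H(U^j|U^{1:j-1})>\log|\mathcal{X}|-\delta_N\}$, $\mathcal{V}_{X|Y}=\{j: H(U^j|U^{1:j-1}Y^{1:N})>\log|\mathcal{X}|-\delta_N\}$.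 Encoding over $k$ blocks: let $\bar C_1$ be uniform on $\mathcal{X}^{|\mathcal{V}_{X|Y}|}$ and $C_1,\dots,C_k$ uniform on $\mathcal{X}^{|\mathcal{V}_X\setminus\mathcal{V}_{X|Y}|}$, all mutually independent. In block $i$, set $\widetilde U_i^{1:N}[\mathcal{V}_{X|Y}]=\bar C_1$ (the same vector in every block), $\widetilde U_i^{1:N}[\mathcal{V}_X\setminus\mathcal{V}_{X|Y}]=C_i$, and for $j\notin\mathcal{V}_X$, in increasing order of $j$, draw $\widetilde U_i^j$ (with fresh independent randomness) according to $q_{U^j|U^{1:j-1}}(\cdot\,|\,\widetilde U_i^{1:j-1})$. Set $\widetilde X_i^{1:N}=\widetilde U_i^{1:N}G_n$ and send it through the memoryless channel $q_{Y^{1:N}|X^{1:N}}=\prod q_{Y|X}$ (independently across blocks), producing output $\widetilde Y_i^{1:N}$. $\widetilde p$ denotes the distributions induced by this scheme, e.g. $\widetilde p_{X_i^{1:N}Y_i^{1:N}}=q_{Y^{1:N}|X^{1:N}}\widetilde p_{X_i^{1:N}}$. *)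

theory Defs
  imports "HOL-Probability.Probability"
begin

(* Vectors a^{1:N} are lists of length N, 0-indexed (index j here = index j+1 in the paper).
   The alphabet X is {0..<p} = F_p.  Entropies/divergence in bits. *)

fun iid_pmf :: "nat \<Rightarrow> 'a pmf \<Rightarrow> 'a list pmf" where
  "iid_pmf 0 M = return_pmf []"
| "iid_pmf (Suc m) M = bind_pmf M (\<lambda>x. map_pmf (\<lambda>xs. x # xs) (iid_pmf m M))"

fun mem_channel :: "('x \<Rightarrow> 'y pmf) \<Rightarrow> 'x list \<Rightarrow> 'y list pmf" where
  "mem_channel W [] = return_pmf []"
| "mem_channel W (x # xs) = bind_pmf (W x) (\<lambda>y. map_pmf (\<lambda>ys. y # ys) (mem_channel W xs))"

text \<open>the kernel [[1,0],[1,1]] (rows a, columns b in {0,1}) and its inverse [[1,0],[-1,1]] over F_p\<close>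
definition kernel_G :: "nat \<Rightarrow> nat \<Rightarrow> nat" where
  "kernel_G a b = (if b \<le> a then 1 else 0)"

definition kernel_G_inv :: "nat \<Rightarrow> nat \<Rightarrow> nat \<Rightarrow> nat" where
  "kernel_G_inv p a b = (if a = b then 1 else if b < a then p - 1 else 0)"

text \<open>Kronecker power: K^{\<otimes>(m+1)} = K \<otimes> K^{\<otimes> m}\<close>
fun kron_pow :: "(nat \<Rightarrow> nat \<Rightarrow> nat) \<Rightarrow> nat \<Rightarrow> nat \<Rightarrow> nat \<Rightarrow> nat" where
  "kron_pow K 0 a b = 1"
| "kron_pow K (Suc m) a b =
     K (a div 2^m) (b div 2^m) * kron_pow K m (a mod 2^m) (b mod 2^m)"

definition vec_mat :: "nat \<Rightarrow> nat \<Rightarrow> (nat \<Rightarrow> nat \<Rightarrow> nat) \<Rightarrow> nat list \<Rightarrow> nat list" where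
  "vec_mat p N M xs = map (\<lambda>j. (\<Sum>i<N. xs ! i * M i j) mod p) [0..<N]"

definition polar_G :: "nat \<Rightarrow> nat \<Rightarrow> nat list \<Rightarrow> nat list" where
  "polar_G p n xs = vec_mat p (2^n) (kron_pow kernel_G n) xs"

definition polar_G_inv :: "nat \<Rightarrow> nat \<Rightarrow> nat list \<Rightarrow> nat list" where
  "polar_G_inv p n us = vec_mat p (2^n) (kron_pow (kernel_G_inv p) n) us"

definition cond_entropy :: "('a \<times> 'b) pmf \<Rightarrow> real" where
  "cond_entropy M =
     - (\<Sum>z\<in>set_pmf M. pmf M z * log 2 (pmf M z / pmf (map_pmf snd M) (snd z)))"

definition KL_div :: "'a pmf \<Rightarrow> 'a pmf \<Rightarrow> ereal" where
  "KL_div P Q =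
     (if \<exists>x. pmf P x > 0 \<and> pmf Q x = 0 then \<infinity>
      else ereal (\<Sum>x\<in>set_pmf P. pmf P x * log 2 (pmf P x / pmf Q x)))"

definition q_XY :: "nat pmf \<Rightarrow> (nat \<Rightarrow> 'y pmf) \<Rightarrow> (nat \<times> 'y) pmf" where
  "q_XY qX W = bind_pmf qX (\<lambda>x. map_pmf (\<lambda>y. (x, y)) (W x))"

definition q_joint :: "nat \<Rightarrow> nat pmf \<Rightarrow> (nat \<Rightarrow> 'y pmf) \<Rightarrow> (nat list \<times> 'y list) pmf" where
  "q_joint N qX W = map_pmf (\<lambda>zs. (map fst zs, map snd zs)) (iid_pmf N (q_XY qX W))"

definition q_UY :: "nat \<Rightarrow> nat \<Rightarrow> nat pmf \<Rightarrow> (nat \<Rightarrow> 'y pmf) \<Rightarrow> (nat list \<times> 'y list) pmf" where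
  "q_UY p n qX W = map_pmf (\<lambda>(xs, ys). (polar_G p n xs, ys)) (q_joint (2^n) qX W)"

definition q_U :: "nat \<Rightarrow> nat \<Rightarrow> nat pmf \<Rightarrow> (nat \<Rightarrow> 'y pmf) \<Rightarrow> nat list pmf" where
  "q_U p n qX W = map_pmf fst (q_UY p n qX W)"

definition H_U :: "nat \<Rightarrow> nat \<Rightarrow> nat pmf \<Rightarrow> (nat \<Rightarrow> 'y pmf) \<Rightarrow> nat \<Rightarrow> real" where
  "H_U p n qX W j = cond_entropy (map_pmf (\<lambda>(us, ys). (us ! j, take j us)) (q_UY p n qX W))"

definition H_UY :: "nat \<Rightarrow> nat \<Rightarrow> nat pmf \<Rightarrow> (nat \<Rightarrow> 'y pmf) \<Rightarrow> nat \<Rightarrow> real" where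
  "H_UY p n qX W j = cond_entropy (map_pmf (\<lambda>(us, ys). (us ! j, (take j us, ys))) (q_UY p n qX W))"

definition delta :: "nat \<Rightarrow> real \<Rightarrow> real" where
  "delta N \<beta> = 2 powr (- (real N powr \<beta>))"

definition V_X :: "nat \<Rightarrow> nat \<Rightarrow> real \<Rightarrow> nat pmf \<Rightarrow> (nat \<Rightarrow> 'y pmf) \<Rightarrow> nat set" where
  "V_X p n \<beta> qX W = {j. j < 2^n \<and> H_U p n qX W j > log 2 p - delta (2^n) \<beta>}"

definition V_XY :: "nat \<Rightarrow> nat \<Rightarrow> real \<Rightarrow> nat pmf \<Rightarrow> (nat \<Rightarrow> 'y pmf) \<Rightarrow> nat set" where
  "V_XY p n \<beta> qX W = {j. j < 2^n \<and> H_UY p n qX W j > log 2 p - delta (2^n) \<beta>}"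

text \<open>q_{U^j|U^{1:j-1}}(. | us); on prefixes of q-probability zero (where the conditional
  is undefined) an arbitrary fixed law is used -- irrelevant for D(q || p~)\<close>
definition cond_next :: "nat \<Rightarrow> nat \<Rightarrow> nat pmf \<Rightarrow> (nat \<Rightarrow> 'y pmf) \<Rightarrow> nat \<Rightarrow> nat list \<Rightarrow> nat pmf" where
  "cond_next p n qX W j us =
     (if set_pmf (q_U p n qX W) \<inter> {us'. take j us' = us} \<noteq> {}
      then map_pmf (\<lambda>us'. us' ! j) (cond_pmf (q_U p n qX W) {us'. take j us' = us})
      else return_pmf 0)"

fun enc_prefix :: "(nat \<Rightarrow> nat list \<Rightarrow> nat pmf) \<Rightarrow> nat set \<Rightarrow> (nat \<Rightarrow> nat) \<Rightarrow> nat \<Rightarrow> nat list pmf" where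
  "enc_prefix cnd V f 0 = return_pmf []"
| "enc_prefix cnd V f (Suc j) =
     bind_pmf (enc_prefix cnd V f j)
       (\<lambda>us. if j \<in> V then return_pmf (us @ [f j]) else map_pmf (\<lambda>u. us @ [u]) (cnd j us))"

text \<open>one block given C1bar and C_i: output (X~_i, Y~_i), with X~ = U~ G_n^{-1}\<close>
definition scheme_block :: "nat \<Rightarrow> nat \<Rightarrow> real \<Rightarrow> nat pmf \<Rightarrow> (nat \<Rightarrow> 'y pmf) \<Rightarrow>
    (nat \<Rightarrow> nat) \<Rightarrow> (nat \<Rightarrow> nat) \<Rightarrow> (nat list \<times> 'y list) pmf" where
  "scheme_block p n \<beta> qX W cbar c =
     bind_pmf
       (enc_prefix (cond_next p n qX W) (V_X p n \<beta> qX W)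
          (\<lambda>j. if j \<in> V_XY p n \<beta> qX W then cbar j else c j) (2^n))
       (\<lambda>us. map_pmf (\<lambda>ys. (polar_G_inv p n us, ys)) (mem_channel W (polar_G_inv p n us)))"

definition scheme :: "nat \<Rightarrow> nat \<Rightarrow> real \<Rightarrow> nat pmf \<Rightarrow> (nat \<Rightarrow> 'y pmf) \<Rightarrow> nat \<Rightarrow>
    (nat list \<times> 'y list) list pmf" where
  "scheme p n \<beta> qX W k =
     bind_pmf (pmf_of_set (PiE (V_XY p n \<beta> qX W) (\<lambda>_. {..<p})))
       (\<lambda>cbar. iid_pmf k
          (bind_pmf (pmf_of_set (PiE (V_X p n \<beta> qX W - V_XY p n \<beta> qX W) (\<lambda>_. {..<p})))
             (\<lambda>c. scheme_block p n \<beta> qX W cbar c)))"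

end

theory Submission
  imports Defs
begin


definition kl :: "'a pmf \<Rightarrow> 'a pmf \<Rightarrow> real" where
  "kl P Q = (\<Sum>x\<in>set_pmf P. pmf P x * log 2 (pmf P x / pmf Q x))"

lemma KL_div_kl:
  assumes "\<And>x. x \<in> set_pmf P \<Longrightarrow> pmf Q x > 0"
  shows "KL_div P Q = ereal (kl P Q)"
proof -
  have "\<not> (\<exists>x. pmf P x > 0 \<and> pmf Q x = 0)"
    using assms by (metis less_irrefl set_pmf_iff pmf_positive)
  then show ?thesis unfolding KL_div_def kl_def by simp
qed

lemma pmf_bind_single:
  assumes "\<And>y. y \<noteq> w \<Longrightarrow> pmf (g y) z = 0"
  shows "pmf (bind_pmf A g) z = pmf A w * pmf (g w) z"
proof -
  have "(\<lambda>y. pmf (g y) z) = (\<lambda>y. indicator {w} y * pmf (g w) z)"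
    using assms by (auto simp: indicator_def)
  then show ?thesis by (simp add: pmf_bind measure_pmf_single)
qed

lemma pmf_bind_ge_sum:
  assumes "finite (set_pmf A)" "S \<subseteq> set_pmf A"
  shows "pmf (bind_pmf A g) z \<ge> (\<Sum>a\<in>S. pmf A a * pmf (g a) z)"
proof -
  have "pmf (bind_pmf A g) z = (\<Sum>a\<in>set_pmf A. pmf (g a) z * pmf A a)"
    unfolding pmf_bind by (rule integral_measure_pmf_real) (use assms in auto)
  also have "\<dots> \<ge> (\<Sum>a\<in>S. pmf (g a) z * pmf A a)"
    by (rule sum_mono2) (use assms in auto)
  finally show ?thesis by (simp add: mult.commute)
qed

lemma pmf_map_ge: "pmf (map_pmf f A) (f a) \<ge> pmf A a"
proof -
  have "pmf (map_pmf f A) (f a) = measure A (f -` {f a})" by (simp add: pmf_map)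
  also have "\<dots> \<ge> measure A {a}" by (rule measure_pmf.finite_measure_mono) auto
  finally show ?thesis by (simp add: measure_pmf_single)
qed

lemma kl_map_le:
  assumes "inj_on f (set_pmf A)" "finite (set_pmf A)" "\<And>a. a \<in> set_pmf A \<Longrightarrow> pmf B a > 0"
  shows "kl (map_pmf f A) (map_pmf f B) \<le> kl A B"
proof -
  have "kl (map_pmf f A) (map_pmf f B) = (\<Sum>a\<in>set_pmf A. pmf (map_pmf f A) (f a) * log 2 (pmf (map_pmf f A) (f a) / pmf (map_pmf f B) (f a)))"
    unfolding kl_def set_map_pmf by (rule sum.reindex[OF assms(1), unfolded comp_def])
  also have "\<dots> = (\<Sum>a\<in>set_pmf A. pmf A a * log 2 (pmf A a / pmf (map_pmf f B) (f a)))"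
    by (rule sum.cong) (auto simp: pmf_map_inj[OF assms(1)])
  also have "\<dots> \<le> kl A B" unfolding kl_def
  proof (rule sum_mono)
    fix a assume a: "a \<in> set_pmf A"
    have pa: "pmf A a > 0" using a by (simp add: pmf_positive)
    have pb: "pmf B a > 0" using assms(3) a .
    have "pmf A a / pmf (map_pmf f B) (f a) \<le> pmf A a / pmf B a"
      using pa pb pmf_map_ge[where f=f and A=B and a=a] by (intro divide_left_mono) auto
    then have "log 2 (pmf A a / pmf (map_pmf f B) (f a)) \<le> log 2 (pmf A a / pmf B a)"
      using pa pb pmf_map_ge[where f=f and A=B and a=a] by (intro log_mono) auto
    then show "pmf A a * log 2 (pmf A a / pmf (map_pmf f B) (f a)) \<le> pmf A a * log 2 (pmf A a / pmf B a)"
      using pa by (intro mult_left_mono) auto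
  qed
  finally show ?thesis .
qed

definition jnt :: "'a pmf \<Rightarrow> ('a \<Rightarrow> 'b pmf) \<Rightarrow> ('a \<times> 'b) pmf" where
  "jnt A K = bind_pmf A (\<lambda>x. map_pmf (Pair x) (K x))"

lemma pmf_jnt: "pmf (jnt A K) (x, y) = pmf A x * pmf (K x) y"
proof -
  have i: "inj (Pair x)" by (auto simp: inj_def)
  show ?thesis unfolding jnt_def
    apply (subst pmf_bind_single[where w=x and g="\<lambda>x'. map_pmf (Pair x') (K x')"])
    by (auto simp: pmf_map_inj'[OF i] pmf_eq_0_set_pmf)
qed

lemma set_jnt: "set_pmf (jnt A K) = Sigma (set_pmf A) (\<lambda>x. set_pmf (K x))"
  unfolding jnt_def by auto

lemma kl_jnt:
  assumes "finite (set_pmf A)" "\<And>x. finite (set_pmf (K x))"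
  shows "kl (jnt A K) (jnt B K) = kl A B"
proof -
  have "kl (jnt A K) (jnt B K) = (\<Sum>x\<in>set_pmf A. \<Sum>y\<in>set_pmf (K x).
          pmf (jnt A K) (x,y) * log 2 (pmf (jnt A K) (x,y) / pmf (jnt B K) (x,y)))"
    unfolding kl_def set_jnt by (subst sum.Sigma) (use assms in auto)
  also have "\<dots> = (\<Sum>x\<in>set_pmf A. \<Sum>y\<in>set_pmf (K x). pmf (K x) y * (pmf A x * log 2 (pmf A x / pmf B x)))"
  proof (intro sum.cong refl)
    fix x y assume "y \<in> set_pmf (K x)"
    then have "pmf (K x) y \<noteq> 0" by (simp add: set_pmf_iff)
    then show "pmf (jnt A K) (x,y) * log 2 (pmf (jnt A K) (x,y) / pmf (jnt B K) (x,y)) = pmf (K x) y * (pmf A x * log 2 (pmf A x / pmf B x))"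
      unfolding pmf_jnt by simp
  qed
  also have "\<dots> = (\<Sum>x\<in>set_pmf A. pmf A x * log 2 (pmf A x / pmf B x))"
    by (simp add: sum_distrib_right[symmetric] sum_pmf_eq_1 assms)
  finally show ?thesis unfolding kl_def .
qed



lemma set_iid: "set_pmf (iid_pmf m M) \<subseteq> {xs. set xs \<subseteq> set_pmf M \<and> length xs = m}"
  by (induction m) fastforce+

lemma iid_nth: "j < k \<Longrightarrow> map_pmf (\<lambda>bs. bs ! j) (iid_pmf k M) = M"
proof (induction k arbitrary: j)
  case 0 then show ?case by simp
next
  case (Suc k)
  show ?case
  proof (cases j)
    case 0
    then show ?thesis by (simp add: map_bind_pmf map_pmf_comp bind_return_pmf' o_def map_pmf_const)
  next
    case (Suc j')
    then have "j' < k" using Suc.prems by simp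
    then show ?thesis using Suc.IH[of j'] Suc(1)
      by (simp add: \<open>j = Suc j'\<close> map_bind_pmf map_pmf_comp o_def bind_pmf_const)
  qed
qed

lemma finite_mem_channel: "finite (set_pmf (mem_channel (W :: _ \<Rightarrow> 'y::finite pmf) xs))"
proof -
  have "set_pmf (mem_channel W xs) \<subseteq> {ys. set ys \<subseteq> (UNIV :: 'y set) \<and> length ys = length xs}"
    by (induction xs) auto
  then show ?thesis by (rule finite_subset) (rule finite_lists_length_eq, simp)
qed

lemma q_joint_jnt: "q_joint N qX W = jnt (iid_pmf N qX) (mem_channel W)"
proof (induction N)
  case 0 then show ?case
    by (simp add: q_joint_def jnt_def bind_return_pmf)
next
  case (Suc N)
  have "q_joint (Suc N) qX W = bind_pmf qX (\<lambda>x. bind_pmf (W x) (\<lambda>y.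
          map_pmf (\<lambda>(xs, ys). (x # xs, y # ys)) (q_joint N qX W)))"
    by (simp add: q_joint_def q_XY_def map_bind_pmf bind_map_pmf map_pmf_comp bind_assoc_pmf
          bind_return_pmf o_def split_def)
  also have "\<dots> = jnt (iid_pmf (Suc N) qX) (mem_channel W)"
    unfolding Suc jnt_def
    by (simp add: map_bind_pmf bind_map_pmf map_pmf_comp bind_assoc_pmf bind_return_pmf o_def
        split_def) (subst bind_commute_pmf, rule refl)
  finally show ?case .
qed



lemma pmf_enc:
  "length u = k \<Longrightarrow> pmf (enc_prefix cnd V f k) u =
     (\<Prod>j<k. if j \<in> V then (if u ! j = f j then 1 else 0) else pmf (cnd j (take j u)) (u ! j))"
proof (induction k arbitrary: u)
  case 0 then show ?case by simp
next
  case (Suc k)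
  define w where "w = take k u"
  define x where "x = u ! k"
  have u: "u = w @ [x]" using Suc.prems unfolding w_def x_def
    by (metis lessI take_Suc_conv_app_nth take_all order_refl)
  have lw: "length w = k" using Suc.prems by (simp add: w_def)
  let ?g = "\<lambda>us. if k \<in> V then return_pmf (us @ [f k]) else map_pmf (\<lambda>a. us @ [a]) (cnd k us)"
  have "pmf (enc_prefix cnd V f (Suc k)) u = pmf (enc_prefix cnd V f k) w * pmf (?g w) u"
    unfolding enc_prefix.simps
    by (rule pmf_bind_single) (auto simp: u pmf_eq_0_set_pmf)
  also have "pmf (?g w) u = (if k \<in> V then (if x = f k then 1 else 0) else pmf (cnd k w) x)"
  proof -
    have i: "inj (\<lambda>a. w @ [a])" by (auto simp: inj_def)
    show ?thesis by (auto simp: u pmf_map_inj'[OF i] pmf_return)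
  qed
  also have "pmf (enc_prefix cnd V f k) w =
     (\<Prod>j<k. if j \<in> V then (if u ! j = f j then 1 else 0) else pmf (cnd j (take j u)) (u ! j))"
    unfolding Suc.IH[OF lw]
    by (intro prod.cong refl) (auto simp: u nth_append lw)
  finally show ?case by (simp add: u lw nth_append)
qed



lemma sum_split_add: "sum f {..<a + b} = sum f {..<(a::nat)} + sum (\<lambda>i. f (a + i)) {..<b}"
  by (induction b) (auto simp: add.assoc)

lemma kernel_inv_2:
  assumes "p \<ge> 2" "a < 2" "b < (2::nat)"
  shows "(kernel_G a 0 * kernel_G_inv p 0 b + kernel_G a 1 * kernel_G_inv p 1 b) mod p
         = (if a = b then 1 else 0)"
proof -
  have "a = 0 \<or> a = 1" "b = 0 \<or> b = 1" using assms by auto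
  then show ?thesis using assms(1)
    by (auto simp: kernel_G_def kernel_G_inv_def)
qed

lemma kron_inv:
  assumes p: "p \<ge> 2"
  shows "a < 2^m \<Longrightarrow> b < 2^m \<Longrightarrow>
    (\<Sum>j<2^m. kron_pow kernel_G m a j * kron_pow (kernel_G_inv p) m j b) mod p = (if a = b then 1 else 0)"
proof (induction m arbitrary: a b)
  case 0 then show ?case using p by simp
next
  case (Suc m)
  define M :: nat where "M = 2^m"
  have M0: "M > 0" by (simp add: M_def)
  define a1 a2 b1 b2 where "a1 = a div M" "a2 = a mod M" "b1 = b div M" "b2 = b mod M"
  have ab: "a1 < 2" "b1 < 2" "a2 < M" "b2 < M" using Suc.prems M0
    by (auto simp: a1_a2_b1_b2_def M_def less_mult_imp_div_less)
  define S where "S = (\<Sum>s<M. kron_pow kernel_G m a2 s * kron_pow (kernel_G_inv p) m s b2)"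
  have S: "S mod p = (if a2 = b2 then 1 else 0)" unfolding S_def M_def
    using Suc.IH ab by (simp add: M_def)
  have "(\<Sum>j<2^Suc m. kron_pow kernel_G (Suc m) a j * kron_pow (kernel_G_inv p) (Suc m) j b)
     = (\<Sum>j<M + M. kron_pow kernel_G (Suc m) a j * kron_pow (kernel_G_inv p) (Suc m) j b)"
    by (simp add: M_def mult_2)
  also have "\<dots> = (kernel_G a1 0 * kernel_G_inv p 0 b1 + kernel_G a1 1 * kernel_G_inv p 1 b1) * S"
    unfolding sum_split_add using M0
    by (simp add: S_def sum_distrib_left sum_distrib_right a1_a2_b1_b2_def M_def[symmetric]
        algebra_simps)
  finally have "(\<Sum>j<2^Suc m. kron_pow kernel_G (Suc m) a j * kron_pow (kernel_G_inv p) (Suc m) j b) mod p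
     = (((kernel_G a1 0 * kernel_G_inv p 0 b1 + kernel_G a1 1 * kernel_G_inv p 1 b1) mod p) * (S mod p)) mod p"
    by (simp add: mod_mult_eq)
  also have "\<dots> = (if a1 = b1 \<and> a2 = b2 then 1 else 0)"
    unfolding S kernel_inv_2[OF p ab(1,2)] using p by auto
  also have "(a1 = b1 \<and> a2 = b2) \<longleftrightarrow> a = b"
    unfolding a1_a2_b1_b2_def by (metis div_mult_mod_eq)
  finally show ?case .
qed



lemma sum_mod_inner: "(\<Sum>j\<in>J. (g j mod p) * h j) mod p = (\<Sum>j\<in>J. g j * h j) mod (p::nat)"
proof -
  have "(\<Sum>j\<in>J. (g j mod p) * h j) mod p = (\<Sum>j\<in>J. ((g j mod p) * h j) mod p) mod p"
    by (simp add: mod_sum_eq)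
  also have "\<dots> = (\<Sum>j\<in>J. (g j * h j) mod p) mod p" by (simp add: mod_mult_left_eq)
  also have "\<dots> = (\<Sum>j\<in>J. g j * h j) mod p" by (simp add: mod_sum_eq)
  finally show ?thesis .
qed

lemma length_polar_G[simp]: "length (polar_G p n xs) = 2^n"
  by (simp add: polar_G_def vec_mat_def)

lemma polar_G_lt: "p > 0 \<Longrightarrow> set (polar_G p n xs) \<subseteq> {..<p}"
  by (auto simp: polar_G_def vec_mat_def)

lemma polar_inv_G:
  assumes p: "p \<ge> 2" and len: "length xs = 2^n" and xs: "set xs \<subseteq> {..<p}"
  shows "polar_G_inv p n (polar_G p n xs) = xs"
proof (rule nth_equalityI)
  show "length (polar_G_inv p n (polar_G p n xs)) = length xs"
    by (simp add: polar_G_inv_def vec_mat_def len)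
next
  fix l assume "l < length (polar_G_inv p n (polar_G p n xs))"
  then have l: "l < 2^n" by (simp add: polar_G_inv_def vec_mat_def)
  let ?A = "kron_pow kernel_G n" and ?B = "kron_pow (kernel_G_inv p) n"
  have "polar_G_inv p n (polar_G p n xs) ! l
      = (\<Sum>j<2^n. ((\<Sum>i<2^n. xs ! i * ?A i j) mod p) * ?B j l) mod p"
    using l by (simp add: polar_G_inv_def polar_G_def vec_mat_def)
  also have "\<dots> = (\<Sum>j<2^n. (\<Sum>i<2^n. xs ! i * ?A i j) * ?B j l) mod p"
    by (rule sum_mod_inner)
  also have "\<dots> = (\<Sum>i<2^n. xs ! i * (\<Sum>j<2^n. ?A i j * ?B j l)) mod p"
  proof -
    have "(\<Sum>j<(2::nat)^n. (\<Sum>i<2^n. xs ! i * ?A i j) * ?B j l) = (\<Sum>j<(2::nat)^n. \<Sum>i<2^n. xs ! i * (?A i j * ?B j l))"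
      by (simp only: sum_distrib_right mult.assoc)
    also have "\<dots> = (\<Sum>i<(2::nat)^n. \<Sum>j<2^n. xs ! i * (?A i j * ?B j l))"
      by (rule sum.swap)
    also have "\<dots> = (\<Sum>i<(2::nat)^n. xs ! i * (\<Sum>j<2^n. ?A i j * ?B j l))"
      by (simp only: sum_distrib_left)
    finally show ?thesis by simp
  qed
  also have "\<dots> = (\<Sum>i<2^n. ((\<Sum>j<2^n. ?A i j * ?B j l) mod p) * xs ! i) mod p"
    by (subst sum_mod_inner) (simp add: mult.commute)
  also have "\<dots> = (\<Sum>i<2^n. (if i = l then xs ! i else 0)) mod p"
    by (intro arg_cong[where f="\<lambda>x. x mod p"] sum.cong refl) (simp add: kron_inv[OF p] l)
  also have "\<dots> = xs ! l mod p" using l by simp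
  also have "\<dots> = xs ! l"
  proof -
    have "xs ! l \<in> set xs" using l len by simp
    then show ?thesis using xs by auto
  qed
  finally show "polar_G_inv p n (polar_G p n xs) ! l = xs ! l" .
qed



definition cn :: "nat list pmf \<Rightarrow> nat \<Rightarrow> nat list \<Rightarrow> nat pmf" where
  "cn Q j us = (if set_pmf Q \<inter> {us'. take j us' = us} \<noteq> {}
      then map_pmf (\<lambda>us'. us' ! j) (cond_pmf Q {us'. take j us' = us})
      else return_pmf 0)"

lemma measure_fin: "finite (set_pmf Q) \<Longrightarrow> measure Q A = (\<Sum>x\<in>A \<inter> set_pmf Q. pmf Q x)"
  by (subst measure_Int_set_pmf[symmetric]) (simp add: measure_measure_pmf_finite)

lemma measure_cond_pmf_fin:
  assumes fin: "finite (set_pmf Q)" and ne: "set_pmf Q \<inter> S \<noteq> {}"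
  shows "measure (cond_pmf Q S) A = measure Q (A \<inter> S) / measure Q S"
proof -
  have fin': "finite (set_pmf (cond_pmf Q S))" using fin ne by (simp add: set_cond_pmf)
  have "measure (cond_pmf Q S) A = (\<Sum>x\<in>A \<inter> (set_pmf Q \<inter> S). pmf (cond_pmf Q S) x)"
    using measure_fin[OF fin'] ne by (simp add: set_cond_pmf)
  also have "\<dots> = (\<Sum>x\<in>A \<inter> S \<inter> set_pmf Q. pmf Q x / measure Q S)"
    by (intro sum.cong) (auto simp: pmf_cond[OF ne])
  also have "\<dots> = measure Q (A \<inter> S) / measure Q S"
    by (simp add: measure_fin[OF fin] sum_divide_distrib)
  finally show ?thesis .
qed

lemma pmf_cn:
  assumes fin: "finite (set_pmf Q)" and ne: "set_pmf Q \<inter> {us'. take j us' = t} \<noteq> {}"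
  shows "pmf (cn Q j t) x = measure Q {u'. u' ! j = x \<and> take j u' = t} / measure Q {u'. take j u' = t}"
proof -
  have "pmf (cn Q j t) x = measure (cond_pmf Q {us'. take j us' = t}) ((\<lambda>us'. us' ! j) -` {x})"
    using ne by (simp add: cn_def pmf_map)
  also have "\<dots> = measure Q ((\<lambda>us'. us' ! j) -` {x} \<inter> {us'. take j us' = t}) / measure Q {u'. take j u' = t}"
    by (rule measure_cond_pmf_fin[OF fin ne])
  also have "(\<lambda>us'. us' ! j) -` {x} \<inter> {us'. take j us' = t} = {u'. u' ! j = x \<and> take j u' = t}" by auto
  finally show ?thesis .
qed

lemma measure_eq_on_set: "A \<inter> set_pmf Q = B \<inter> set_pmf Q \<Longrightarrow> measure Q A = measure Q B"
  by (metis measure_Int_set_pmf)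

lemma telescope:
  "(\<And>j. j \<le> k \<Longrightarrow> m j \<noteq> (0::real)) \<Longrightarrow> (\<Prod>j<k. m (Suc j) / m j) = m k / m 0"
  by (induction k) auto

lemma chain_rule:
  assumes fin: "finite (set_pmf Q)" and u: "u \<in> set_pmf Q"
    and len: "\<And>u'. u' \<in> set_pmf Q \<Longrightarrow> length u' = N"
  shows "pmf Q u = (\<Prod>j<N. pmf (cn Q j (take j u)) (u ! j))"
proof -
  define m where "m j = measure Q {u'. take j u' = take j u}" for j
  have mpos: "m j > 0" for j unfolding m_def by (rule measure_pmf_posI[OF u]) simp
  have step: "pmf (cn Q j (take j u)) (u ! j) = m (Suc j) / m j" if j: "j < N" for j
  proof -
    have "pmf (cn Q j (take j u)) (u ! j) = measure Q {u'. u' ! j = u ! j \<and> take j u' = take j u} / m j"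
      unfolding m_def by (rule pmf_cn[OF fin]) (use u in auto)
    also have "measure Q {u'. u' ! j = u ! j \<and> take j u' = take j u} = m (Suc j)"
    proof -
      have "{u'. u' ! j = u ! j \<and> take j u' = take j u} \<inter> set_pmf Q = {u'. take (Suc j) u' = take (Suc j) u} \<inter> set_pmf Q"
      proof (intro set_eqI iffI)
        fix u' assume a: "u' \<in> {u'. u' ! j = u ! j \<and> take j u' = take j u} \<inter> set_pmf Q"
        then have "length u' = N" using len by auto
        then show "u' \<in> {u'. take (Suc j) u' = take (Suc j) u} \<inter> set_pmf Q"
          using a j len[OF u] by (auto simp: take_Suc_conv_app_nth)
      next
        fix u' assume a: "u' \<in> {u'. take (Suc j) u' = take (Suc j) u} \<inter> set_pmf Q"
        then have l: "length u' = N" using len by auto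
        from a have t: "take (Suc j) u' = take (Suc j) u" by auto
        then have "take j (take (Suc j) u') = take j (take (Suc j) u)" by simp
        then have "take j u' = take j u" by simp
        moreover have "take (Suc j) u' ! j = take (Suc j) u ! j" using t by simp
        then have "u' ! j = u ! j" by simp
        ultimately show "u' \<in> {u'. u' ! j = u ! j \<and> take j u' = take j u} \<inter> set_pmf Q"
          using a by auto
      qed
      then show ?thesis unfolding m_def by (rule measure_eq_on_set)
    qed
    finally show ?thesis .
  qed
  have "(\<Prod>j<N. pmf (cn Q j (take j u)) (u ! j)) = (\<Prod>j<N. m (Suc j) / m j)"
    by (rule prod.cong) (auto simp: step)
  also have "\<dots> = m N / m 0" by (rule telescope) (use mpos in \<open>auto simp: less_le\<close>)
  also have "m 0 = 1" by (simp add: m_def)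
  also have "m N = pmf Q u"
  proof -
    have "{u'. take N u' = take N u} \<inter> set_pmf Q = {u} \<inter> set_pmf Q"
      using len u by auto
    then show ?thesis unfolding m_def
      by (subst measure_eq_on_set[of _ Q "{u}"]) (auto simp: measure_pmf_single)
  qed
  finally show ?thesis by simp
qed

lemma sum_map_pmf:
  assumes "finite (set_pmf Q)"
  shows "(\<Sum>z\<in>set_pmf (map_pmf h Q). pmf (map_pmf h Q) z * g z) = (\<Sum>u\<in>set_pmf Q. pmf Q u * g (h u))"
proof -
  have "(\<Sum>z\<in>set_pmf (map_pmf h Q). pmf (map_pmf h Q) z * g z) = measure_pmf.expectation (map_pmf h Q) g"
    by (subst integral_measure_pmf_real[where A="set_pmf (map_pmf h Q)"]) (use assms in \<open>auto simp: mult.commute\<close>)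
  also have "\<dots> = measure_pmf.expectation Q (\<lambda>u. g (h u))" by simp
  also have "\<dots> = (\<Sum>u\<in>set_pmf Q. pmf Q u * g (h u))"
    by (subst integral_measure_pmf_real[where A="set_pmf Q"]) (use assms in \<open>auto simp: mult.commute\<close>)
  finally show ?thesis .
qed

lemma entropy_term:
  assumes fin: "finite (set_pmf Q)"
  shows "(\<Sum>u\<in>set_pmf Q. pmf Q u * log 2 (pmf (cn Q j (take j u)) (u ! j)))
       = - cond_entropy (map_pmf (\<lambda>us. (us ! j, take j us)) Q)"
proof -
  let ?h = "\<lambda>us. (us ! j, take j us)"
  let ?M = "map_pmf ?h Q"
  have "(\<Sum>u\<in>set_pmf Q. pmf Q u * log 2 (pmf (cn Q j (take j u)) (u ! j)))
      = (\<Sum>z\<in>set_pmf ?M. pmf ?M z * log 2 (pmf (cn Q j (snd z)) (fst z)))"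
    by (subst sum_map_pmf[OF fin]) simp
  also have "\<dots> = (\<Sum>z\<in>set_pmf ?M. pmf ?M z * log 2 (pmf ?M z / pmf (map_pmf snd ?M) (snd z)))"
  proof (intro sum.cong refl)
    fix z assume "z \<in> set_pmf ?M"
    then obtain u where u: "u \<in> set_pmf Q" "z = ?h u" by auto
    have ne: "set_pmf Q \<inter> {us'. take j us' = snd z} \<noteq> {}" using u by auto
    have "pmf ?M z = measure Q {u'. u' ! j = fst z \<and> take j u' = snd z}"
      unfolding pmf_map by (rule arg_cong[where f="measure Q"]) (auto simp: u)
    moreover have "pmf (map_pmf snd ?M) (snd z) = measure Q {u'. take j u' = snd z}"
      unfolding map_pmf_comp pmf_map by (rule arg_cong[where f="measure Q"]) auto
    ultimately show "pmf ?M z * log 2 (pmf (cn Q j (snd z)) (fst z)) =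
        pmf ?M z * log 2 (pmf ?M z / pmf (map_pmf snd ?M) (snd z))"
      by (simp add: pmf_cn[OF fin ne])
  qed
  finally show ?thesis unfolding cond_entropy_def by simp
qed



lemma log_prod_pos:
  "finite A \<Longrightarrow> (\<And>x. x \<in> A \<Longrightarrow> f x > 0) \<Longrightarrow> log b (\<Prod>x\<in>A. f x) = (\<Sum>x\<in>A. log b (f x))"
  by (induction A rule: finite_induct) (auto simp: log_mult_pos prod_pos)

lemma map_fst_jnt: "map_pmf fst (jnt A K) = A"
  by (simp add: jnt_def map_bind_pmf map_pmf_comp o_def map_pmf_const bind_return_pmf')

lemma cond_next_cn: "cond_next p n qX W = cn (q_U p n qX W)"
  by (intro ext) (simp add: cond_next_def cn_def)

lemma block_marginal:
  assumes "i \<in> {1..k}"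
  shows "map_pmf (\<lambda>bs. bs ! (i - 1)) (scheme p n \<beta> qX W k) =
    jnt (map_pmf (polar_G_inv p n)
      (bind_pmf (pmf_of_set (PiE (V_XY p n \<beta> qX W) (\<lambda>_. {..<p}))) (\<lambda>cb.
        bind_pmf (pmf_of_set (PiE (V_X p n \<beta> qX W - V_XY p n \<beta> qX W) (\<lambda>_. {..<p}))) (\<lambda>c.
          enc_prefix (cond_next p n qX W) (V_X p n \<beta> qX W)
            (\<lambda>j. if j \<in> V_XY p n \<beta> qX W then cb j else c j) (2^n)))))
      (mem_channel W)"
proof -
  have ik: "i - 1 < k" using assms by auto
  show ?thesis
    unfolding scheme_def map_bind_pmf iid_nth[OF ik] jnt_def bind_map_pmf scheme_block_def
    by (simp add: bind_assoc_pmf map_bind_pmf bind_map_pmf)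
qed



lemma P_lower:
  fixes p N :: nat and V VY :: "nat set" and u :: "nat list"
  assumes p: "p > 0" and VN: "V \<subseteq> {..<N}" and VYN: "VY \<subseteq> {..<N}"
    and len: "length u = N" and us: "set u \<subseteq> {..<p}"
  shows "pmf (bind_pmf (pmf_of_set (PiE VY (\<lambda>_. {..<p}))) (\<lambda>cb.
            bind_pmf (pmf_of_set (PiE (V - VY) (\<lambda>_. {..<p}))) (\<lambda>c.
              enc_prefix cnd V (\<lambda>j. if j \<in> VY then cb j else c j) N))) u
       \<ge> (\<Prod>j\<in>{..<N}-V. pmf (cnd j (take j u)) (u ! j)) / real p ^ card V"
proof -
  define CB where "CB = PiE VY (\<lambda>_. {..<p})"
  define CC where "CC = PiE (V - VY) (\<lambda>_. {..<p})"
  define S where "S = PiE VY (\<lambda>j. if j \<in> V then {u ! j} else {..<p})"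
  define c0 where "c0 = restrict (\<lambda>j. u ! j) (V - VY)"
  define R where "R = (\<Prod>j\<in>{..<N}-V. pmf (cnd j (take j u)) (u ! j))"
  have finV: "finite V" "finite VY" using VN VYN finite_subset by auto
  have ulp: "u ! j < p" if "j < N" for j using us len that nth_mem by fastforce
  have finCB: "finite CB" "CB \<noteq> {}" unfolding CB_def using finV p
    by (auto simp: finite_PiE PiE_eq_empty_iff)
  have finCC: "finite CC" "CC \<noteq> {}" unfolding CC_def using finV p
    by (auto simp: finite_PiE PiE_eq_empty_iff)
  have SCB: "S \<subseteq> CB" unfolding S_def CB_def
  proof (intro subsetI PiE_I)
    fix x j assume x: "x \<in> PiE VY (\<lambda>j. if j \<in> V then {u ! j} else {..<p})" and j: "j \<in> VY"
    then have "x j \<in> (if j \<in> V then {u ! j} else {..<p})" by (auto simp: PiE_iff)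
    then show "x j \<in> {..<p}" using VN ulp by (auto split: if_splits)
  next
    fix x j assume "x \<in> PiE VY (\<lambda>j. if j \<in> V then {u ! j} else {..<p})" "j \<notin> VY"
    then show "x j = undefined" by (auto simp: PiE_iff extensional_def)
  qed
  have c0CC: "c0 \<in> CC" unfolding c0_def CC_def using VN ulp by auto
  have cardCB: "card CB = p ^ card VY" unfolding CB_def using finV by (simp add: card_PiE)
  have cardCC: "card CC = p ^ card (V - VY)" unfolding CC_def using finV by (simp add: card_PiE)
  have cardS: "card S = p ^ card (VY - V)"
  proof -
    have "card S = (\<Prod>j\<in>VY. if j \<in> V then 1 else p)"
      unfolding S_def using finV by (simp add: card_PiE if_distrib cong: if_cong)
    also have "\<dots> = p ^ card (VY - V)"
      using finV by (simp add: prod.If_cases Diff_eq)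
    finally show ?thesis .
  qed
  have enc_val: "pmf (enc_prefix cnd V (\<lambda>j. if j \<in> VY then cb j else c0 j) N) u = R"
    if cb: "cb \<in> S" for cb
  proof -
    have "pmf (enc_prefix cnd V (\<lambda>j. if j \<in> VY then cb j else c0 j) N) u =
      (\<Prod>j<N. if j \<in> V then 1 else pmf (cnd j (take j u)) (u ! j))"
      unfolding pmf_enc[OF len]
      by (intro prod.cong refl) (use cb in \<open>auto simp: S_def c0_def PiE_iff\<close>)
    also have "\<dots> = R" unfolding R_def
      by (simp add: prod.If_cases Diff_eq)
    finally show ?thesis .
  qed
  have Rnn: "R \<ge> 0" unfolding R_def by (simp add: prod_nonneg)
  let ?inner = "\<lambda>cb. bind_pmf (pmf_of_set CC) (\<lambda>c. enc_prefix cnd V (\<lambda>j. if j \<in> VY then cb j else c j) N)"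
  have inner: "pmf (?inner cb) u \<ge> R / card CC" if cb: "cb \<in> S" for cb
  proof -
    have "pmf (?inner cb) u \<ge> (\<Sum>c\<in>{c0}. pmf (pmf_of_set CC) c * pmf (enc_prefix cnd V (\<lambda>j. if j \<in> VY then cb j else c j) N) u)"
      by (rule pmf_bind_ge_sum) (use finCC c0CC in auto)
    then show ?thesis using enc_val[OF cb] c0CC finCC by simp
  qed
  have "pmf (bind_pmf (pmf_of_set CB) ?inner) u \<ge> (\<Sum>cb\<in>S. pmf (pmf_of_set CB) cb * pmf (?inner cb) u)"
    by (rule pmf_bind_ge_sum) (use finCB SCB in auto)
  moreover have "(\<Sum>cb\<in>S. pmf (pmf_of_set CB) cb * pmf (?inner cb) u) \<ge> (\<Sum>cb\<in>S. (1 / card CB) * (R / card CC))"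
  proof (rule sum_mono)
    fix cb assume cb: "cb \<in> S"
    then have h: "pmf (pmf_of_set CB) cb = 1 / card CB" using SCB finCB by auto
    have "(1 / card CB) * (R / card CC) \<le> (1 / card CB) * pmf (?inner cb) u"
      by (rule mult_left_mono[OF inner[OF cb]]) simp
    then show "(1 / card CB) * (R / card CC) \<le> pmf (pmf_of_set CB) cb * pmf (?inner cb) u"
      by (simp only: h)
  qed
  moreover have "(\<Sum>cb\<in>S. (1 / card CB) * (R / card CC)) = R / real p ^ card V"
  proof -
    have cV: "card V = card (VY \<inter> V) + card (V - VY)"
      using finV by (metis Int_commute card_Int_Diff)
    have cVY: "card VY = card (VY \<inter> V) + card (VY - V)"
      using finV by (metis card_Int_Diff)
    have pp: "real p > 0" using p by simp
    show ?thesis unfolding sum_constant cardS cardCB cardCC cV cVY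
      using pp by (simp add: power_add field_simps)
  qed
  ultimately show ?thesis unfolding CB_def[symmetric] CC_def[symmetric] R_def[symmetric] by linarith
qed



lemma log_prod_pos_aux:
  "finite A \<Longrightarrow> (\<And>x. x \<in> A \<Longrightarrow> f x > 0) \<Longrightarrow> log b (\<Prod>x\<in>A. f x) = (\<Sum>x\<in>A. log b (f x))"
  by (induction A rule: finite_induct) (auto simp: log_mult_pos prod_pos)


lemma kl_bound:
  fixes Q P :: "nat list pmf" and p N :: nat and V :: "nat set" and d :: real
  assumes fin: "finite (set_pmf Q)" and len: "\<And>u. u \<in> set_pmf Q \<Longrightarrow> length u = N"
    and VN: "V \<subseteq> {..<N}" and p: "p > 0" and d: "d \<ge> 0"
    and Plow: "\<And>u. u \<in> set_pmf Q \<Longrightarrow>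
        pmf P u \<ge> (\<Prod>j\<in>{..<N}-V. pmf (cn Q j (take j u)) (u ! j)) / real p ^ card V"
    and H: "\<And>j. j \<in> V \<Longrightarrow> cond_entropy (map_pmf (\<lambda>us. (us ! j, take j us)) Q) > log 2 p - d"
  shows "(\<forall>u\<in>set_pmf Q. pmf P u > 0) \<and> kl Q P \<le> real N * d"
proof -
  define c where "c j u = pmf (cn Q j (take j u)) (u ! j)" for j u
  have finV: "finite V" using VN finite_subset by auto
  have pp: "real p > 0" using p by simp
  have key: "pmf P u > 0 \<and> log 2 (pmf Q u / pmf P u) \<le> (\<Sum>j\<in>V. log 2 p + log 2 (c j u))"
    if u: "u \<in> set_pmf Q" for u
  proof -
    have Qu: "pmf Q u = (\<Prod>j<N. c j u)" unfolding c_def by (rule chain_rule[OF fin u len])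
    have Qpos: "pmf Q u > 0" using u by (simp add: pmf_positive)
    have cpos: "c j u > 0" if "j < N" for j
    proof -
      have "c j u \<noteq> 0"
      proof
        assume "c j u = 0"
        then have "(\<Prod>j<N. c j u) = 0" using that by (intro prod_zero) auto
        then show False using Qpos Qu by linarith
      qed
      moreover have "c j u \<ge> 0" by (simp add: c_def)
      ultimately show ?thesis by simp
    qed
    define R where "R = (\<Prod>j\<in>{..<N}-V. c j u)"
    have Rpos: "R > 0" unfolding R_def using cpos by (intro prod_pos) auto
    have Pl: "pmf P u \<ge> R / real p ^ card V" using Plow[OF u] by (simp add: R_def c_def)
    have Rp: "R / real p ^ card V > 0" using Rpos pp by simp
    have Ppos: "pmf P u > 0" using Pl Rp by linarith
    have split: "pmf Q u = (\<Prod>j\<in>V. c j u) * R"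
      unfolding Qu R_def using prod.subset_diff[OF VN, of "\<lambda>j. c j u"] by (simp add: mult.commute)
    have "log 2 (pmf Q u / pmf P u) \<le> log 2 (pmf Q u / (R / real p ^ card V))"
    proof (rule log_mono)
      show "pmf Q u / pmf P u \<le> pmf Q u / (R / real p ^ card V)"
        by (rule divide_left_mono[OF Pl less_imp_le[OF Qpos] mult_pos_pos[OF Ppos Rp]])
    qed (use Qpos Ppos in auto)
    also have "pmf Q u / (R / real p ^ card V) = real p ^ card V * (\<Prod>j\<in>V. c j u)"
      unfolding split using Rpos by (simp add: field_simps)
    also have "log 2 \<dots> = real (card V) * log 2 p + (\<Sum>j\<in>V. log 2 (c j u))"
    proof -
      have "(\<Prod>j\<in>V. c j u) > 0" using cpos VN by (intro prod_pos) auto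
      then show ?thesis using pp finV cpos VN
        by (subst log_mult_pos) (auto simp: log_nat_power intro!: log_prod_pos_aux)
    qed
    also have "\<dots> = (\<Sum>j\<in>V. log 2 p + log 2 (c j u))" by (simp add: sum.distrib)
    finally show ?thesis using Ppos by simp
  qed
  have "kl Q P \<le> (\<Sum>u\<in>set_pmf Q. pmf Q u * (\<Sum>j\<in>V. log 2 p + log 2 (c j u)))"
    unfolding kl_def using key by (intro sum_mono mult_left_mono) auto
  also have "\<dots> = (\<Sum>j\<in>V. log 2 p + (\<Sum>u\<in>set_pmf Q. pmf Q u * log 2 (c j u)))"
  proof -
    have "(\<Sum>u\<in>set_pmf Q. pmf Q u * (\<Sum>j\<in>V. log 2 p + log 2 (c j u)))
        = (\<Sum>u\<in>set_pmf Q. \<Sum>j\<in>V. pmf Q u * (log 2 p + log 2 (c j u)))"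
      by (simp only: sum_distrib_left)
    also have "\<dots> = (\<Sum>j\<in>V. \<Sum>u\<in>set_pmf Q. pmf Q u * (log 2 p + log 2 (c j u)))"
      by (rule sum.swap)
    also have "\<dots> = (\<Sum>j\<in>V. (\<Sum>u\<in>set_pmf Q. pmf Q u) * log 2 p + (\<Sum>u\<in>set_pmf Q. pmf Q u * log 2 (c j u)))"
      by (intro sum.cong refl) (simp add: distrib_left sum.distrib sum_distrib_right)
    finally show ?thesis by (simp add: sum_pmf_eq_1[OF fin])
  qed
  also have "\<dots> = (\<Sum>j\<in>V. log 2 p - cond_entropy (map_pmf (\<lambda>us. (us ! j, take j us)) Q))"
    unfolding c_def by (simp add: entropy_term[OF fin])
  also have "\<dots> \<le> (\<Sum>j\<in>V. d)" by (intro sum_mono) (use H in fastforce)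
  also have "\<dots> = real (card V) * d" by simp
  also have "\<dots> \<le> real N * d"
  proof -
    have "card V \<le> card {..<N}" by (rule card_mono[OF _ VN]) simp
    then show ?thesis using d by (intro mult_right_mono) auto
  qed
  finally show ?thesis using key by auto
qed



theorem lemma1:
  fixes p n k i :: nat and \<beta> :: real and qX :: "nat pmf" and W :: "nat \<Rightarrow> 'y::finite pmf"
  assumes "prime p"
    and "set_pmf qX \<subseteq> {..<p}"
    and "n \<ge> 1"
    and "0 < \<beta>" and "\<beta> < 1/2"
    and "i \<in> {1..k}"
  shows "KL_div (q_joint (2^n) qX W) (map_pmf (\<lambda>bs. bs ! (i - 1)) (scheme p n \<beta> qX W k))
           \<le> ereal (real (2^n) * delta (2^n) \<beta>)"
proof -
  define N where "N = (2::nat)^n"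
  define QX where "QX = iid_pmf N qX"
  define Q where "Q = q_U p n qX W"
  define V where "V = V_X p n \<beta> qX W"
  define VY where "VY = V_XY p n \<beta> qX W"
  define G where "G = polar_G p n"
  define Gi where "Gi = polar_G_inv p n"
  define K where "K = mem_channel W"
  define P where "P = bind_pmf (pmf_of_set (PiE VY (\<lambda>_. {..<p}))) (\<lambda>cb.
        bind_pmf (pmf_of_set (PiE (V - VY) (\<lambda>_. {..<p}))) (\<lambda>c.
          enc_prefix (cond_next p n qX W) V (\<lambda>j. if j \<in> VY then cb j else c j) N))"
  have p2: "p \<ge> 2" using assms(1) by (simp add: prime_ge_2_nat)
  have hj: "q_joint (2^n) qX W = jnt QX K"
    unfolding QX_def K_def N_def by (rule q_joint_jnt)
  have blk: "map_pmf (\<lambda>bs. bs ! (i - 1)) (scheme p n \<beta> qX W k) = jnt (map_pmf Gi P) K"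
    unfolding block_marginal[OF assms(6)] Gi_def P_def K_def V_def VY_def N_def ..
  have QQX: "Q = map_pmf G QX"
  proof -
    have "Q = map_pmf G (map_pmf fst (jnt QX K))"
      unfolding Q_def q_U_def q_UY_def hj[unfolded N_def[symmetric]] N_def[symmetric] G_def
      by (simp add: map_pmf_comp split_def)
    then show ?thesis by (simp add: map_fst_jnt)
  qed
  have setQX: "length x = N \<and> set x \<subseteq> {..<p}" if "x \<in> set_pmf QX" for x
    using set_iid[of N qX] assms(2) that unfolding QX_def by blast
  have finQX: "finite (set_pmf QX)"
  proof (rule finite_subset)
    show "set_pmf QX \<subseteq> {xs. set xs \<subseteq> {..<p} \<and> length xs = N}" using setQX by auto
    show "finite {xs. set xs \<subseteq> {..<p} \<and> length xs = N}" by (rule finite_lists_length_eq) simp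
  qed
  have finQ: "finite (set_pmf Q)" using finQX by (simp add: QQX)
  have setQ: "length u = N \<and> set u \<subseteq> {..<p}" if "u \<in> set_pmf Q" for u
    using that p2 polar_G_lt[of p n] by (auto simp: QQX G_def N_def)
  have inv: "Gi (G x) = x" if "x \<in> set_pmf QX" for x
    unfolding Gi_def G_def using polar_inv_G[OF p2] setQX[OF that] by (simp add: N_def)
  have QX_eq: "QX = map_pmf Gi Q"
  proof -
    have "map_pmf Gi Q = map_pmf (Gi \<circ> G) QX" by (simp add: QQX map_pmf_comp o_def)
    also have "\<dots> = map_pmf id QX" by (rule map_pmf_cong) (auto simp: inv)
    finally show ?thesis by simp
  qed
  have inj: "inj_on Gi (set_pmf Q)"
    unfolding QQX set_map_pmf by (rule inj_onI) (auto simp: inv)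
  have VN: "V \<subseteq> {..<N}" and VYN: "VY \<subseteq> {..<N}"
    unfolding V_def VY_def V_X_def V_XY_def N_def by auto
  have cnd: "cond_next p n qX W = cn Q" unfolding Q_def by (rule cond_next_cn)
  have Plow: "pmf P u \<ge> (\<Prod>j\<in>{..<N}-V. pmf (cn Q j (take j u)) (u ! j)) / real p ^ card V"
    if u: "u \<in> set_pmf Q" for u
    unfolding P_def cnd using P_lower[OF _ VN VYN, of p u] setQ[OF u] p2 by auto
  have Hj: "cond_entropy (map_pmf (\<lambda>us. (us ! j, take j us)) Q) > log 2 p - delta N \<beta>"
    if "j \<in> V" for j
  proof -
    have "H_U p n qX W j = cond_entropy (map_pmf (\<lambda>us. (us ! j, take j us)) Q)"
      unfolding H_U_def Q_def q_U_def by (simp add: map_pmf_comp split_def)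
    then show ?thesis using that unfolding V_def V_X_def N_def by auto
  qed
  have d: "delta N \<beta> \<ge> 0" by (simp add: delta_def)
  have kb: "(\<forall>u\<in>set_pmf Q. pmf P u > 0) \<and> kl Q P \<le> real N * delta N \<beta>"
    by (rule kl_bound[OF finQ _ VN _ d Plow Hj]) (use setQ p2 in auto)
  have Pi_pos: "pmf (map_pmf Gi P) x > 0" if "x \<in> set_pmf QX" for x
  proof -
    have "G x \<in> set_pmf Q" using that by (simp add: QQX)
    then have "pmf P (G x) > 0" using kb by auto
    moreover have "pmf (map_pmf Gi P) (Gi (G x)) \<ge> pmf P (G x)" by (rule pmf_map_ge)
    ultimately show ?thesis using inv[OF that] by simp
  qed
  have "KL_div (jnt QX K) (jnt (map_pmf Gi P) K) = ereal (kl (jnt QX K) (jnt (map_pmf Gi P) K))"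
  proof (rule KL_div_kl)
    fix z assume "z \<in> set_pmf (jnt QX K)"
    then obtain x y where z: "z = (x, y)" "x \<in> set_pmf QX" "y \<in> set_pmf (K x)"
      by (auto simp: set_jnt)
    have "pmf (K x) y > 0" using z(3) by (simp add: pmf_positive)
    then show "pmf (jnt (map_pmf Gi P) K) z > 0"
      using Pi_pos[OF z(2)] by (simp add: z(1) pmf_jnt)
  qed
  also have "kl (jnt QX K) (jnt (map_pmf Gi P) K) = kl QX (map_pmf Gi P)"
    by (rule kl_jnt[OF finQX]) (simp add: K_def finite_mem_channel)
  also have "kl QX (map_pmf Gi P) \<le> kl Q P"
    unfolding QX_eq by (rule kl_map_le[OF inj finQ]) (use kb in auto)
  also have "\<dots> \<le> real N * delta N \<beta>" using kb by auto
  finally have "KL_div (jnt QX K) (jnt (map_pmf Gi P) K) \<le> ereal (real N * delta N \<beta>)"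
    by simp
  then show ?thesis unfolding hj blk N_def by simp
qed


end
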